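(* Let $a,b$ be complex numbers of modulus one. There is no $6\times 6$ complex Hadamard matrix $H$ all of whose entries lie in $\{1,a,b\}$ which is complex equivalent to a matrix of the form $$H(\alpha,\beta)=\begin{bmatrix} 1&1&1&1&1&1\\ 1&1&1&-1&-1&-1\\ 1&\omega&\omega^2&\alpha&\alpha\omega&\alpha\omega^2\\ 1&\omega&\omega^2&-\alpha&-\alpha\omega&-\alpha\omega^2\\ 1&\omega^2&\omega&\beta&\beta\omega^2&\beta\omega\\ 1&\omega^2&\omega&-\beta&-\beta\omega^2&-\beta\omega \end{bmatrix},$$ where $\omega=e^{2\pi i/3}$ and $\alpha,\beta$ are complex numbers of modulus one.
   Context: A complex Hadamard matrix (CHM) of order $n$ is an $n\times n$ complex matrix $H$ all of whose entries have modulus one and which satisfies $HH^\dagger=nI$. A monomial unitary matrix is a unitary matrix each of whose rows and columns has exactly one nonzero entry, that entry having modulus one. Two $n\times n$ matrices $U,V$ are complex equivalent if $U=PVQ$ for some $n\times n$ monomial unitary matrices $P,Q$. *)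

theory Defs
  imports "HOL-Analysis.Analysis"
begin

definition ctrans :: "complex^'n^'m \<Rightarrow> complex^'m^'n" where
  "ctrans A = (\<chi> i j. cnj (A $ j $ i))"

definition complex_hadamard :: "complex^'n^'n \<Rightarrow> bool" where
  "complex_hadamard H \<longleftrightarrow>
     (\<forall>i j. norm (H $ i $ j) = 1) \<and> H ** ctrans H = of_nat CARD('n) *\<^sub>R mat 1"

definition monomial_unitary :: "complex^'n^'n \<Rightarrow> bool" where
  "monomial_unitary P \<longleftrightarrow>
     (\<forall>i. \<exists>!j. P $ i $ j \<noteq> 0) \<and> (\<forall>j. \<exists>!i. P $ i $ j \<noteq> 0) \<and>
     (\<forall>i j. P $ i $ j \<noteq> 0 \<longrightarrow> norm (P $ i $ j) = 1)"

definition complex_equivalent :: "complex^'n^'n \<Rightarrow> complex^'n^'n \<Rightarrow> bool" where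
  "complex_equivalent U V \<longleftrightarrow>
     (\<exists>P Q. monomial_unitary P \<and> monomial_unitary Q \<and> U = P ** V ** Q)"

definition omega3 :: complex where
  "omega3 = cis (2 * pi / 3)"

definition Hab :: "complex \<Rightarrow> complex \<Rightarrow> complex^6^6" where
  "Hab \<alpha> \<beta> = (let w = omega3;
     rows = [[1,1,1,1,1,1],
             [1,1,1,-1,-1,-1],
             [1,w,w^2,\<alpha>,\<alpha>*w,\<alpha>*w^2],
             [1,w,w^2,-\<alpha>,-\<alpha>*w,-\<alpha>*w^2],
             [1,w^2,w,\<beta>,\<beta>*w^2,\<beta>*w],
             [1,w^2,w,-\<beta>,-\<beta>*w^2,-\<beta>*w]]
   in \<chi> i j. rows ! nat (Rep_bit0 i) ! nat (Rep_bit0 j))"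

end

theory Submission
  imports Defs
begin


definition inS :: "complex \<Rightarrow> complex \<Rightarrow> complex \<Rightarrow> bool" where
  "inS a b y \<longleftrightarrow> y = 1 \<or> y = a \<or> y = b"

lemma four_distinct:
  "inS a b p \<Longrightarrow> inS a b q \<Longrightarrow> inS a b r \<Longrightarrow> inS a b s \<Longrightarrow> p\<noteq>q \<Longrightarrow> p\<noteq>r \<Longrightarrow> p\<noteq>s
   \<Longrightarrow> q\<noteq>r \<Longrightarrow> q\<noteq>s \<Longrightarrow> r\<noteq>s \<Longrightarrow> False"
  unfolding inS_def by metis

lemma pair_lemma:
  fixes e z r s r2 s2 k :: complex
  assumes m: "r \<in> {e,-e,z}" "s \<in> {e,-e,z}" "r2 \<in> {e,-e,z}" "s2 \<in> {e,-e,z}"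
    and eq: "r * s2 = k * (r2 * s)" and k: "k \<noteq> 1" "k \<noteq> -1" and nz: "r2 \<noteq> 0" "s \<noteq> 0"
  shows "(of_bool (r=z) - of_bool (s=z) :: int) \<noteq> of_bool (r2=z) - of_bool (s2=z)"
proof
  assume h: "(of_bool (r=z) - of_bool (s=z) :: int) = of_bool (r2=z) - of_bool (s2=z)"
  have "r * s2 = r2 * s \<or> r * s2 = -(r2 * s)"
    using m h by (auto simp: of_bool_def split: if_splits)
  then show False
  proof
    assume "r * s2 = r2 * s" with eq nz k show False by simp
  next
    assume "r * s2 = -(r2 * s)" with eq have kk: "k * (r2 * s) = -(r2 * s)" by simp
    have "(k + 1) * (r2 * s) = 0" by (simp add: distrib_right kk)
    with nz k show False by (simp add: add_eq_0_iff2)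
  qed
qed

lemma block_lemma:
  fixes e z A B C D :: complex
  assumes m: "A \<in> {e,-e,z}" "B \<in> {e,-e,z}" "C \<in> {e,-e,z}" "D \<in> {e,-e,z}"
    and eq: "A * D = -(B * C)" and nz: "e \<noteq> 0" "z \<noteq> 0" and z4: "z^4 \<noteq> e^4"
  shows "(of_bool (A=z) + of_bool (D=z) :: int) = of_bool (B=z) + of_bool (C=z)"
proof (rule ccontr)
  assume h: "\<not> ?thesis"
  have zz: "z * z \<noteq> e * e \<and> z * z \<noteq> -(e * e)"
  proof
    show "z * z \<noteq> e * e" proof assume "z * z = e * e" hence "(z * z)^2 = (e * e)^2" by simp
      with z4 show False by (simp add: power2_eq_square power4_eq_xxxx mult.assoc) qed
    show "z * z \<noteq> -(e * e)" proof assume "z * z = -(e * e)" hence "(z * z)^2 = (e * e)^2" by simp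
      with z4 show False by (simp add: power2_eq_square power4_eq_xxxx mult.assoc) qed
  qed
  have ze: "z \<noteq> e" "z \<noteq> -e" using zz by auto
  have f1: "e * z \<noteq> e * e" using ze nz by simp
  have f2: "e * z \<noteq> -(e * e)" proof assume "e * z = -(e * e)" hence "e * z = e * (-e)" by simp
    hence "z = -e" by (simp only: mult_left_cancel[OF nz(1)])
    with ze show False by simp qed
  have f3: "z * z \<noteq> z * e" using ze nz by simp
  have f4: "z * z \<noteq> -(z * e)" proof assume "z * z = -(z * e)" hence "z * z = z * (-e)" by simp
    hence "z = -e" by (simp only: mult_left_cancel[OF nz(2)])
    with ze show False by simp qed
  have f: "e * z \<noteq> e * e" "e * z \<noteq> -(e * e)" "z * z \<noteq> e * z" "z * z \<noteq> -(e * z)"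
    "-(e * z) \<noteq> e * e" "-(z * z) \<noteq> e * z" "-(z * z) \<noteq> e * e" "e * z \<noteq> -(z * z)"
    using f1 f2 f3 f4 zz by (auto simp: mult.commute minus_equation_iff)
  show False using m h eq nz zz f ze by (auto simp: of_bool_def ac_simps split: if_splits)
qed

lemma pair_S:
  assumes cov: "\<And>y. inS a b y \<Longrightarrow> y \<in> {e,-e,z}" and m: "inS a b r" "inS a b s" "inS a b r2" "inS a b s2"
    and eq: "r * s2 = k * (r2 * s)" and k: "k \<noteq> 1" "k \<noteq> -1" and nz: "r2 \<noteq> 0" "s \<noteq> 0"
  shows "(of_bool (r=z) - of_bool (s=z) :: int) \<noteq> of_bool (r2=z) - of_bool (s2=z)"
  using pair_lemma[OF cov[OF m(1)] cov[OF m(2)] cov[OF m(3)] cov[OF m(4)] eq k nz] .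

lemma block_S:
  assumes cov: "\<And>y. inS a b y \<Longrightarrow> y \<in> {e,-e,z}" and m: "inS a b A" "inS a b B" "inS a b C" "inS a b D"
    and eq: "A * D = -(B * C)" and nz: "e \<noteq> 0" "z \<noteq> 0" and z4: "z^4 \<noteq> e^4"
  shows "(of_bool (A=z) + of_bool (D=z) :: int) = of_bool (B=z) + of_bool (C=z)"
  using block_lemma[OF cov[OF m(1)] cov[OF m(2)] cov[OF m(3)] cov[OF m(4)] eq nz z4] .

lemma cube_cover:
  assumes t: "inS a b t" "inS a b (w * t)" "inS a b (w^2 * t)" and w: "w^3 = 1" "w \<noteq> 1" and t0: "t \<noteq> 0"
    and y: "inS a b y"
  shows "y^3 = t^3"
proof -
  have w0: "w \<noteq> 0" using w by auto
  have w2: "w^2 \<noteq> 1" proof assume "w^2 = 1" hence "w^3 = w" by (simp add: power3_eq_cube power2_eq_square)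
    with w show False by simp qed
  have ww: "w \<noteq> w^2" proof assume "w = w^2" hence "w * 1 = w * w" by (simp add: power2_eq_square)
    hence "1 = w" using mult_left_cancel[OF w0] by blast with w show False by simp qed
  have d: "t \<noteq> w * t" "t \<noteq> w^2 * t" "w * t \<noteq> w^2 * t" using t0 w w2 ww by auto
  have "y = t \<or> y = w * t \<or> y = w^2 * t" using four_distinct[OF t y] d by blast
  moreover have "w^6 = 1" using w by (metis power_mult power_one numeral_times_numeral mult_2_right numeral_Bit0 semiring_norm(2) semiring_norm(6))
  moreover have "(w * t)^3 = t^3" "(w^2 * t)^3 = t^3" using w \<open>w^6 = 1\<close>
    by (simp_all add: power_mult_distrib power_mult[symmetric])
  ultimately show ?thesis by auto
qed

lemma cube_contra:
  assumes cov: "\<And>y. inS a b y \<Longrightarrow> y^3 = K" and K: "K \<noteq> 0"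
    and p: "inS a b p" "inS a b (c * p)" and q: "inS a b q" "inS a b (-(c * q))"
  shows False
proof -
  have "p^3 = K" "(c*p)^3 = K" "q^3 = K" "(-(c*q))^3 = K" using cov p q by auto
  hence "c^3 * K = K" "-(c^3 * K) = K" by (auto simp: power_mult_distrib)
  hence "c^3 = 1" "c^3 = -1" using K by (auto simp: minus_equation_iff)
  thus False by simp
qed

lemma fourth_contra:
  assumes cov: "\<And>y. inS a b y \<Longrightarrow> y^4 = E" and E: "E \<noteq> 0"
    and m: "inS a b r" "inS a b s" "inS a b r2" "inS a b s2" and eq: "r * s2 = k * (r2 * s)"
  shows "k^4 = 1"
proof -
  have "(r * s2)^4 = (k * (r2 * s))^4" using eq by simp
  hence "E * E = k^4 * (E * E)" using cov m by (simp add: power_mult_distrib)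
  thus ?thesis using E by simp
qed

lemma int3: "(f0::int) \<in> {-1,0,1} \<Longrightarrow> f1 \<in> {-1,0,1} \<Longrightarrow> f2 \<in> {-1,0,1} \<Longrightarrow> f0 \<noteq> f1 \<Longrightarrow> f0 \<noteq> f2 \<Longrightarrow> f1 \<noteq> f2
  \<Longrightarrow> (f0 = 1 \<or> f1 = 1 \<or> f2 = 1) \<and> (f0 = -1 \<or> f1 = -1 \<or> f2 = -1)"
  by auto

lemma ob_range: "(of_bool P - of_bool Q :: int) \<in> {-1,0,1}" by auto
lemma ob_one: "(of_bool P - of_bool Q :: int) = 1 \<Longrightarrow> P" by (cases P; cases Q) auto
lemma ob_mone: "(of_bool P - of_bool Q :: int) = -1 \<Longrightarrow> \<not> P" by (cases P; cases Q) auto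

lemma core:
  fixes a b c d al w :: complex and x :: "nat \<Rightarrow> complex"
  assumes w3: "w^3 = 1" and w1: "w \<noteq> 1"
    and a0: "a \<noteq> 0" and b0: "b \<noteq> 0" and c0: "c \<noteq> 0" and d0: "d \<noteq> 0" and al0: "al \<noteq> 0"
    and xS: "\<And>v. v < 6 \<Longrightarrow> inS a b (x v)"
    and r1a: "\<And>v. v < 3 \<Longrightarrow> inS a b (c * x v)"
    and r1b: "\<And>v. 3 \<le> v \<Longrightarrow> v < 6 \<Longrightarrow> inS a b (-(c * x v))"
    and r20: "inS a b (d * x 0)" and r21: "inS a b (d * w * x 1)" and r22: "inS a b (d * w^2 * x 2)"
    and r23: "inS a b (d * al * x 3)" and r24: "inS a b (d * al * w * x 4)" and r25: "inS a b (d * al * w^2 * x 5)"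
  shows False
proof -
  have S0: "inS a b y \<Longrightarrow> y \<noteq> 0" for y using a0 b0 by (auto simp: inS_def)
  have x0: "v<6 \<Longrightarrow> x v \<noteq> 0" for v using S0 xS by blast
  have w0: "w \<noteq> 0" using w3 by auto
  have w6: "w^6 = 1" using w3 by (metis power_mult power_one numeral_times_numeral mult_2_right numeral_Bit0 semiring_norm(2) semiring_norm(6))
  have w4: "w^4 \<noteq> 1" proof assume "w^4 = 1" hence "w^3 * w = 1" by (simp add: power_Suc2[symmetric])
    with w3 w1 show False by simp qed
  have wm: "w \<noteq> -1" using w3 by auto
  have w2: "w^2 \<noteq> 1" proof assume "w^2 = 1" hence "w^3 = w" by (simp add: power3_eq_cube power2_eq_square)
    with w3 w1 show False by simp qed
  have w2m: "w^2 \<noteq> -1" proof assume "w^2 = -1" hence "w^4 = 1" by (metis power_mult numeral_times_numeral mult_2_right numeral_Bit0 semiring_norm(2) semiring_norm(6) power_minus1_even neg_one_even_power even_numeral power2_minus power_one)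
    with w4 show False by simp qed
  have xv: "inS a b (x 0)" "inS a b (x 1)" "inS a b (x 2)" "inS a b (x 3)" "inS a b (x 4)" "inS a b (x 5)"
    using xS by auto
  have cx: "inS a b (c * x 0)" "inS a b (c * x 1)" "inS a b (c * x 2)"
    "inS a b (-(c * x 3))" "inS a b (-(c * x 4))" "inS a b (-(c * x 5))" using r1a r1b by auto
  have "\<exists>e. e \<noteq> 0 \<and> inS a b e \<and> inS a b (-e)"
  proof (rule ccontr)
    assume na: "\<not> ?thesis"
    have dis: "x v \<noteq> x u" if "v<3" "3\<le>u" "u<6" for v u
    proof
      assume "x v = x u"
      then have "inS a b (-(c * x v))" using r1b that by simp
      moreover have "inS a b (c * x v)" using r1a that by simp
      moreover have "c * x v \<noteq> 0" using c0 x0 that by simp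
      ultimately show False using na by blast
    qed
    have "x 0 = x 1 \<and> x 1 = x 2 \<or> x 3 = x 4 \<and> x 4 = x 5"
    proof (rule ccontr)
      assume nn: "\<not> ?thesis"
      have d9: "x 0 \<noteq> x 3" "x 0 \<noteq> x 4" "x 0 \<noteq> x 5" "x 1 \<noteq> x 3" "x 1 \<noteq> x 4" "x 1 \<noteq> x 5"
        "x 2 \<noteq> x 3" "x 2 \<noteq> x 4" "x 2 \<noteq> x 5" using dis by auto
      from nn have "(x 0 \<noteq> x 1 \<or> x 1 \<noteq> x 2) \<and> (x 3 \<noteq> x 4 \<or> x 4 \<noteq> x 5)" by blast
      then show False using four_distinct xv d9 by metis
    qed
    then show False
    proof
      assume h: "x 0 = x 1 \<and> x 1 = x 2"
      have cov: "inS a b y \<Longrightarrow> y^3 = (d * x 0)^3" for y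
      proof (rule cube_cover[of a b "d * x 0" w])
        have "d * w * x 1 = w * (d * x 0)" "d * w^2 * x 2 = w^2 * (d * x 0)" using h by (simp_all add: ac_simps)
        then show "inS a b (w * (d * x 0))" "inS a b (w^2 * (d * x 0))" using r21 r22 by metis+
      qed (use r20 w3 w1 d0 x0 in auto)
      show False using cube_contra[OF cov _ xv(1) cx(1) xv(4) cx(4)] d0 x0 by simp
    next
      assume h: "x 3 = x 4 \<and> x 4 = x 5"
      have cov: "inS a b y \<Longrightarrow> y^3 = (d * al * x 3)^3" for y
      proof (rule cube_cover[of a b "d * al * x 3" w])
        have "d * al * w * x 4 = w * (d * al * x 3)" "d * al * w^2 * x 5 = w^2 * (d * al * x 3)" using h by (simp_all add: ac_simps)
        then show "inS a b (w * (d * al * x 3))" "inS a b (w^2 * (d * al * x 3))" using r24 r25 by metis+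
      qed (use r23 w3 w1 d0 al0 x0 in auto)
      show False using cube_contra[OF cov _ xv(1) cx(1) xv(4) cx(4)] d0 al0 x0 by simp
    qed
  qed
  then obtain e where e0: "e \<noteq> 0" and eS: "inS a b e" "inS a b (-e)" by blast
  have uniq: "y = y2" if "inS a b y" "inS a b y2" "y \<noteq> e" "y \<noteq> -e" "y2 \<noteq> e" "y2 \<noteq> -e" for y y2
  proof (rule ccontr)
    assume "y \<noteq> y2"
    moreover have "e \<noteq> -e" using e0 by simp
    ultimately show False using four_distinct[OF that(1,2) eS] that by metis
  qed
  obtain z where zS: "inS a b z" and cov: "\<And>y. inS a b y \<Longrightarrow> y \<in> {e,-e,z}"
  proof (cases "\<exists>y. inS a b y \<and> y \<noteq> e \<and> y \<noteq> -e")
    case True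
    then obtain y where "inS a b y" "y \<noteq> e" "y \<noteq> -e" by blast
    then show ?thesis using that uniq by blast
  next
    case False
    then show ?thesis using that eS by blast
  qed
  have z0: "z \<noteq> 0" using S0 zS by blast
  have z4: "z^4 \<noteq> e^4"
  proof
    assume "z^4 = e^4"
    hence c4: "inS a b y \<Longrightarrow> y^4 = e^4" for y using cov[of y] by auto
    have "w^4 = 1" apply (rule fourth_contra[OF c4 _ xv(1) r20 xv(2) r21]) using e0 by (auto simp: ac_simps)
    with w4 show False by simp
  qed
  have w0': "w^2 \<noteq> 0" using w0 by simp
  have N: "\<exists>j<3. x j = z" "\<exists>v<3. x v \<noteq> z"
  proof -
    define F0 where "F0 = (of_bool (x 0 = z) - of_bool (d * x 0 = z) :: int)"
    define F1 where "F1 = (of_bool (x 1 = z) - of_bool (d * w * x 1 = z) :: int)"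
    define F2 where "F2 = (of_bool (x 2 = z) - of_bool (d * w^2 * x 2 = z) :: int)"
    have "F0 \<noteq> F1" unfolding F0_def F1_def
      apply (rule pair_S[OF cov xv(1) r20 xv(2) r21, where k=w])
      apply (use w1 wm w2 w2m d0 x0 in \<open>simp_all add: ac_simps\<close>)
      done
    moreover have "F0 \<noteq> F2" unfolding F0_def F2_def
      by (rule pair_S[OF cov xv(1) r20 xv(3) r22, where k="w^2"]) (use w1 wm w2 w2m d0 x0 in \<open>simp_all add: ac_simps\<close>)
    moreover have "F1 \<noteq> F2" unfolding F1_def F2_def
      by (rule pair_S[OF cov xv(2) r21 xv(3) r22, where k=w]) (use w1 wm w2 w2m d0 x0 w0 in \<open>simp_all add: ac_simps power2_eq_square\<close>)
    ultimately have "(F0 = 1 \<or> F1 = 1 \<or> F2 = 1) \<and> (F0 = -1 \<or> F1 = -1 \<or> F2 = -1)"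
      using int3[of F0 F1 F2] ob_range unfolding F0_def F1_def F2_def by blast
    then have "(x 0 = z \<or> x 1 = z \<or> x 2 = z) \<and> (x 0 \<noteq> z \<or> x 1 \<noteq> z \<or> x 2 \<noteq> z)"
      unfolding F0_def F1_def F2_def using ob_one ob_mone by blast
    moreover have "(0::nat) < 3" "(1::nat) < 3" "(2::nat) < 3" by simp_all
    ultimately show "\<exists>j<3. x j = z" "\<exists>v<3. x v \<noteq> z" by blast+
  qed
  have N2: "\<exists>u. 3 \<le> u \<and> u < 6 \<and> x u = z"
  proof -
    define F0 where "F0 = (of_bool (x 3 = z) - of_bool (d * al * x 3 = z) :: int)"
    define F1 where "F1 = (of_bool (x 4 = z) - of_bool (d * al * w * x 4 = z) :: int)"
    define F2 where "F2 = (of_bool (x 5 = z) - of_bool (d * al * w^2 * x 5 = z) :: int)"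
    have "F0 \<noteq> F1" unfolding F0_def F1_def
      by (rule pair_S[OF cov xv(4) r23 xv(5) r24, where k=w]) (use w1 wm w2 w2m d0 al0 x0 in \<open>simp_all add: ac_simps\<close>)
    moreover have "F0 \<noteq> F2" unfolding F0_def F2_def
      by (rule pair_S[OF cov xv(4) r23 xv(6) r25, where k="w^2"]) (use w1 wm w2 w2m d0 al0 x0 in \<open>simp_all add: ac_simps\<close>)
    moreover have "F1 \<noteq> F2" unfolding F1_def F2_def
      by (rule pair_S[OF cov xv(5) r24 xv(6) r25, where k=w]) (use w1 wm w2 w2m d0 al0 x0 w0 in \<open>simp_all add: ac_simps power2_eq_square\<close>)
    ultimately have "F0 = 1 \<or> F1 = 1 \<or> F2 = 1"
      using int3[of F0 F1 F2] ob_range unfolding F0_def F1_def F2_def by blast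
    then have "x 3 = z \<or> x 4 = z \<or> x 5 = z"
      unfolding F0_def F1_def F2_def using ob_one by blast
    moreover have "(3::nat) \<le> 3 \<and> (3::nat) < 6" "(3::nat) \<le> 4 \<and> (4::nat) < 6" "(3::nat) \<le> 5 \<and> (5::nat) < 6" by simp_all
    ultimately show ?thesis by blast
  qed
  from N obtain j v where j: "j < 3" "x j = z" and v: "v < 3" "x v \<noteq> z" by blast
  from N2 obtain u where u: "3 \<le> u" "u < 6" "x u = z" by blast
  have blk: "(of_bool (x i = z) + of_bool (-(c * x u) = z) :: int) = of_bool (x u = z) + of_bool (c * x i = z)"
    if "i < 3" for i
    by (rule block_S[OF cov xS xS r1a r1b _ e0 z0 z4]) (use that u in \<open>simp_all add: ac_simps\<close>)
  have e1: "(of_bool (-(c * z) = z) :: int) = of_bool (c * z = z)" using blk[OF j(1)] j(2) u(3) by simp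
  have e2: "(of_bool (-(c * z) = z) :: int) = 1 + of_bool (c * x v = z)" using blk[OF v(1)] v(2) u(3) by simp
  have h1: "-(c * z) = z" using e2 by (cases "-(c * z) = z"; cases "c * x v = z") auto
  have h2: "c * z = z" using e1 h1 by (cases "c * z = z") auto
  have "z = -z" using h1 h2 by simp
  with z0 show False by simp
qed



lemma sum_single_nz:
  fixes f :: "'a::finite \<Rightarrow> complex"
  assumes "\<And>m. m \<noteq> k \<Longrightarrow> f m = 0"
  shows "sum f UNIV = f k"
proof -
  have "sum f UNIV = f k + sum f (UNIV - {k})" by (simp add: sum.remove[of UNIV k])
  also have "sum f (UNIV - {k}) = 0" using assms by (intro sum.neutral) auto
  finally show ?thesis by simp
qed

lemma mono_entry:
  fixes P V Q :: "complex^'n^'n"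
  assumes "\<And>m. m \<noteq> k \<Longrightarrow> P $ i $ m = 0" "\<And>m. m \<noteq> v \<Longrightarrow> Q $ m $ j = 0"
  shows "(P ** V ** Q) $ i $ j = P $ i $ k * V $ k $ v * Q $ v $ j"
proof -
  have mm: "(A ** B) $ r $ s = (\<Sum>t\<in>UNIV. A $ r $ t * B $ t $ s)" for A B :: "complex^'n^'n" and r s
    by (simp add: matrix_matrix_mult_def)
  have "(P ** V ** Q) $ i $ j = (P ** V) $ i $ v * Q $ v $ j"
    unfolding mm[of "P ** V" Q] using assms(2)
    by (subst sum_single_nz[of v]) auto
  also have "(P ** V) $ i $ v = P $ i $ k * V $ k $ v"
    unfolding mm[of P V] using assms(1)
    by (subst sum_single_nz[of k]) auto
  finally show ?thesis .
qed

lemma mu_col: "monomial_unitary P \<Longrightarrow> \<exists>i. P $ i $ j \<noteq> 0"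
  unfolding monomial_unitary_def by (meson ex1_implies_ex)
lemma mu_row: "monomial_unitary P \<Longrightarrow> \<exists>j. P $ i $ j \<noteq> 0"
  unfolding monomial_unitary_def by (meson ex1_implies_ex)
lemma mu_row_uniq: assumes "monomial_unitary P" "P $ i $ j \<noteq> 0" "m \<noteq> j" shows "P $ i $ m = 0"
proof -
  have "\<exists>!j. P $ i $ j \<noteq> 0" using assms(1) unfolding monomial_unitary_def by simp
  thus ?thesis using assms(2,3) by auto
qed
lemma mu_col_uniq: assumes "monomial_unitary P" "P $ i $ j \<noteq> 0" "m \<noteq> i" shows "P $ m $ j = 0"
proof -
  have "\<exists>!i. P $ i $ j \<noteq> 0" using assms(1) unfolding monomial_unitary_def by simp
  thus ?thesis using assms(2,3) by auto
qed

definition I6 :: "nat \<Rightarrow> 6" where "I6 k = Abs_bit0 (int k)"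

lemma Rep_I6: "k < 6 \<Longrightarrow> Rep_bit0 (I6 k) = int k"
  unfolding I6_def by (rule Abs_bit0_inverse) auto

lemma Hab_entry: "k < 6 \<Longrightarrow> v < 6 \<Longrightarrow> Hab al be $ I6 k $ I6 v =
   [[1,1,1,1,1,1],
    [1,1,1,-1,-1,-1],
    [1,omega3,omega3^2,al,al * omega3,al * omega3^2],
    [1,omega3,omega3^2,-al,-al * omega3,-al * omega3^2],
    [1,omega3^2,omega3,be,be * omega3^2,be * omega3],
    [1,omega3^2,omega3,-be,-be * omega3^2,-be * omega3]] ! k ! v"
  unfolding Hab_def Let_def by (simp add: Rep_I6)

lemma omega3_props: "omega3^3 = 1" "omega3 \<noteq> 1"
proof -
  show "omega3^3 = 1" unfolding omega3_def using Complex.DeMoivre[of "2*pi/3" 3] by simp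
  have "sin (2 * pi / 3) > 0" by (rule sin_gt_zero) auto
  hence "Im omega3 \<noteq> 0" unfolding omega3_def by simp
  thus "omega3 \<noteq> 1" by auto
qed


theorem mainTheorem3:
  fixes a b :: complex
  assumes "norm a = 1" and "norm b = 1"
  shows "\<not> (\<exists>(H::complex^6^6) \<alpha> \<beta>.
            complex_hadamard H \<and> (\<forall>i j. H $ i $ j \<in> {1, a, b}) \<and>
            norm \<alpha> = 1 \<and> norm \<beta> = 1 \<and> complex_equivalent H (Hab \<alpha> \<beta>))"
proof
  assume "\<exists>(H::complex^6^6) \<alpha> \<beta>.
            complex_hadamard H \<and> (\<forall>i j. H $ i $ j \<in> {1, a, b}) \<and>
            norm \<alpha> = 1 \<and> norm \<beta> = 1 \<and> complex_equivalent H (Hab \<alpha> \<beta>)"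
  then obtain H :: "complex^6^6" and al be where
    HS: "\<forall>i j. H $ i $ j \<in> {1, a, b}" and al: "norm al = 1" and eqv: "complex_equivalent H (Hab al be)"
    by blast
  from eqv obtain P Q where mP: "monomial_unitary P" and mQ: "monomial_unitary Q"
    and HPQ: "H = P ** Hab al be ** Q" unfolding complex_equivalent_def by blast
  define ii where "ii k = (SOME i. P $ i $ I6 k \<noteq> 0)" for k
  define jj where "jj v = (SOME j. Q $ I6 v $ j \<noteq> 0)" for v
  have Pii: "P $ ii k $ I6 k \<noteq> 0" for k
  proof -
    have "\<exists>i. P $ i $ I6 k \<noteq> 0" by (rule mu_col[OF mP])
    thus ?thesis unfolding ii_def by (rule someI_ex)
  qed
  have Pz: "P $ ii k $ m = 0" if "m \<noteq> I6 k" for k m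
    by (rule mu_row_uniq[OF mP Pii that])
  have Qjj: "Q $ I6 v $ jj v \<noteq> 0" for v
  proof -
    have "\<exists>j. Q $ I6 v $ j \<noteq> 0" by (rule mu_row[OF mQ])
    thus ?thesis unfolding jj_def by (rule someI_ex)
  qed
  have Qz: "Q $ m $ jj v = 0" if "m \<noteq> I6 v" for v m
    by (rule mu_col_uniq[OF mQ Qjj that])
  define p where "p k = P $ ii k $ I6 k" for k
  define q where "q v = Q $ I6 v $ jj v" for v
  have p0: "p k \<noteq> 0" for k using Pii unfolding p_def by blast
  have q0: "q v \<noteq> 0" for v using Qjj unfolding q_def by blast
  have ent: "inS a b (p k * Hab al be $ I6 k $ I6 v * q v)" for k v
  proof -
    have "H $ ii k $ jj v = p k * Hab al be $ I6 k $ I6 v * q v"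
      unfolding HPQ p_def q_def by (rule mono_entry) (use Pz Qz in auto)
    thus ?thesis using HS unfolding inS_def by (metis insert_iff singletonD)
  qed
  have a0: "a \<noteq> 0" "b \<noteq> 0" "al \<noteq> 0" using assms al by auto
  define x where "x v = p 0 * q v" for v
  define c where "c = p 1 / p 0"
  define d where "d = p 2 / p 0"
  let ?w = omega3
  have e: "inS a b (p k * ([[1,1,1,1,1,1],
    [1,1,1,-1,-1,-1],
    [1,omega3,omega3^2,al,al * omega3,al * omega3^2],
    [1,omega3,omega3^2,-al,-al * omega3,-al * omega3^2],
    [1,omega3^2,omega3,be,be * omega3^2,be * omega3],
    [1,omega3^2,omega3,-be,-be * omega3^2,-be * omega3]] ! k ! v) * q v)" if "k < 6" "v < 6" for k v
    using ent[of k v] Hab_entry[OF that, of al be] by simp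
  show False
  proof (rule core[of omega3 a b c d al x])
    show "omega3^3 = 1" "omega3 \<noteq> 1" by (rule omega3_props)+
    show "a \<noteq> 0" "b \<noteq> 0" "al \<noteq> 0" by (rule a0)+
    show "c \<noteq> 0" "d \<noteq> 0" unfolding c_def d_def using p0 by auto
    have lt6: "v = 0 \<or> v = 1 \<or> v = 2 \<or> v = 3 \<or> v = 4 \<or> v = 5" if "v < 6" for v::nat using that by arith
    have lt3: "v = 0 \<or> v = 1 \<or> v = 2" if "v < 3" for v::nat using that by arith
    have cx: "c * x v = p 1 * q v" for v by (simp add: c_def x_def p0)
    have dx: "d * y * x v = p 2 * y * q v" for y v by (simp add: d_def x_def p0)
    have e0: "inS a b (p 0 * q v)" if "v < 6" for v
      using lt6[OF that] e[of 0 0] e[of 0 1] e[of 0 2] e[of 0 3] e[of 0 4] e[of 0 5] by auto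
    have e1: "inS a b (p 1 * q v)" if "v < 3" for v
      using lt3[OF that] e[of 1 0] e[of 1 1] e[of 1 2] by auto
    have e1': "inS a b (-(p 1 * q v))" if "3 \<le> v" "v < 6" for v
      using lt6[OF that(2)] that(1) e[of 1 3] e[of 1 4] e[of 1 5] by auto
    show "inS a b (x v)" if "v < 6" for v using e0[OF that] unfolding x_def .
    show "inS a b (c * x v)" if "v < 3" for v using e1[OF that] unfolding cx .
    show "inS a b (-(c * x v))" if "3 \<le> v" "v < 6" for v using e1'[OF that] unfolding cx .
    show "inS a b (d * x 0)" using e[of 2 0] dx[of 1 0] by simp
    show "inS a b (d * omega3 * x 1)" unfolding dx using e[of 2 1] by simp
    show "inS a b (d * omega3^2 * x 2)" unfolding dx using e[of 2 2] by simp
    show "inS a b (d * al * x 3)" unfolding dx using e[of 2 3] by simp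
    have eqs: "d * al * omega3 * x 4 = p 2 * (al * omega3) * q 4" "d * al * omega3^2 * x 5 = p 2 * (al * omega3^2) * q 5"
      using dx[of "al * omega3" 4] dx[of "al * omega3^2" 5] by (simp_all add: mult.assoc)
    show "inS a b (d * al * omega3 * x 4)" "inS a b (d * al * omega3^2 * x 5)"
      unfolding eqs using e[of 2 4] e[of 2 5] by simp_all
  qed
qed

end
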